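(* If $g\in\mathcal{G}_0^\infty$ and $\mathcal{P}$ is a finite partition with positive Shannon dynamical entropy $h(\eta,\mathcal{P})>0$, then $h(g,\mathcal{P})=\infty$.
   Context: $\mathcal{G}_0$ is the set of concave functions $g:[0,1]\to\mathbb{R}$ with $g(0)=\lim_{x\to0^+}g(x)=0$. Let $\eta(x)=-x\log x$ and $\eta(0)=0$. Define $\mathcal{G}_0^\infty=\{g\in\mathcal{G}_0:\lim_{x\to0^+}g(x)/\eta(x)=\infty\}$. $T$ is a measure-preserving map of a probability space $(X,\Sigma,\mu)$. For a finite measurable partition $\mathcal{P}$, let $\mathcal{P}_n=\bigvee_{i=0}^{n-1}T^{-i}\mathcal{P}$, $H(g,\mathcal{P})=\sum_{A\in\mathcal{P}}g(\mu(A))$, and $h(g,\mathcal{P})=\limsup_{n\to\infty}\frac1nH(g,\mathcal{P}_n)$. *)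

theory Defs
  imports "HOL-Probability.Probability"
begin

definition eta :: "real \<Rightarrow> real" where
  "eta x = (if x = 0 then 0 else - x * ln x)"

definition G0 :: "(real \<Rightarrow> real) set" where
  "G0 = {g. concave_on {0..1} g \<and> g 0 = 0 \<and> (g \<longlongrightarrow> 0) (at_right 0)}"

definition G0_inf :: "(real \<Rightarrow> real) set" where
  "G0_inf = {g \<in> G0. filterlim (\<lambda>x. g x / eta x) at_top (at_right 0)}"

definition measure_preserving_map :: "'a measure \<Rightarrow> ('a \<Rightarrow> 'a) \<Rightarrow> bool" where
  "measure_preserving_map M T \<longleftrightarrow> T \<in> M \<rightarrow>\<^sub>M M \<and>
     (\<forall>A \<in> sets M. measure M (T -` A \<inter> space M) = measure M A)"

definition finite_meas_partition :: "'a measure \<Rightarrow> 'a set set \<Rightarrow> bool" where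
  "finite_meas_partition M P \<longleftrightarrow> finite P \<and> P \<subseteq> sets M \<and> \<Union>P = space M \<and>
     (\<forall>A\<in>P. \<forall>B\<in>P. A \<noteq> B \<longrightarrow> A \<inter> B = {})"

definition iter_join :: "'a measure \<Rightarrow> ('a \<Rightarrow> 'a) \<Rightarrow> 'a set set \<Rightarrow> nat \<Rightarrow> 'a set set" where
  "iter_join M T P n = {space M \<inter> (\<Inter>i<n. (T ^^ i) -` (C i)) | C. \<forall>i<n. C i \<in> P}"

definition gen_entropy :: "'a measure \<Rightarrow> (real \<Rightarrow> real) \<Rightarrow> 'a set set \<Rightarrow> real" where
  "gen_entropy M g P = (\<Sum>A\<in>P. g (measure M A))"

definition gen_dyn_entropy ::
  "'a measure \<Rightarrow> ('a \<Rightarrow> 'a) \<Rightarrow> (real \<Rightarrow> real) \<Rightarrow> 'a set set \<Rightarrow> ereal" where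
  "gen_dyn_entropy M T g P =
     limsup (\<lambda>n. ereal (gen_entropy M g (iter_join M T P n) / real n))"

end

theory Submission
  imports Defs
begin

lemma pointwise_bound:
  assumes g: "g \<in> G0_inf" and K: "K \<ge> 0"
  shows "\<exists>c\<ge>0. \<forall>x\<in>{0..1::real}. g x \<ge> K * eta x - c * x"
proof -
  have conc: "concave_on {0..1} g" and g0: "g 0 = 0" and lim: "filterlim (\<lambda>x. g x / eta x) at_top (at_right 0)"
    using g by (auto simp: G0_inf_def G0_def)
  have "eventually (\<lambda>x. g x / eta x > K) (at_right 0)"
    using lim by (simp add: filterlim_at_top_dense)
  then obtain d where d: "d > 0" and dd: "\<And>x. 0 < x \<Longrightarrow> x < d \<Longrightarrow> g x / eta x > K"
    by (auto simp: eventually_at_right_field)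
  define d' where "d' = min d 1"
  have d'pos: "d' > 0" "d' \<le> 1" using d by (auto simp: d'_def)
  define c where "c = \<bar>g 1\<bar> + K * (- ln d')"
  have lnd: "- ln d' \<ge> 0" using d'pos by simp
  have c0: "c \<ge> 0" unfolding c_def using K lnd
    by (smt (verit) abs_ge_zero mult_nonneg_nonneg)
  have lin: "g x \<ge> x * g 1" if "x \<in> {0..1}" for x
  proof -
    have "g ((1 - x) *\<^sub>R 0 + x *\<^sub>R 1) \<ge> (1 - x) * g 0 + x * g 1"
      using concave_onD[OF conc, of x 0 1] that by auto
    thus ?thesis using g0 by simp
  qed
  have "\<forall>x\<in>{0..1::real}. g x \<ge> K * eta x - c * x"
  proof
    fix x :: real assume x: "x \<in> {0..1}"
    show "g x \<ge> K * eta x - c * x"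
    proof (cases "x = 0")
      case True thus ?thesis using g0 by (simp add: eta_def)
    next
      case False
      hence xp: "x > 0" using x by auto
      show ?thesis
      proof (cases "x < d'")
        case True
        hence "x < 1" "x < d" using d'_def by auto
        have etap: "eta x > 0" using xp \<open>x < 1\<close> by (simp add: eta_def mult_pos_neg)
        have "g x / eta x > K" using dd xp \<open>x < d\<close> by auto
        hence "g x > K * eta x" using etap by (simp add: field_simps)
        moreover have "c * x \<ge> 0" using c0 xp by simp
        ultimately show ?thesis by linarith
      next
        case False
        hence "ln x \<ge> ln d'" using d'pos xp by simp
        hence "eta x \<le> x * (- ln d')" using xp by (simp add: eta_def)
        hence "K * eta x \<le> K * (x * (- ln d'))" using K mult_left_mono by blast
        moreover have "g x \<ge> - \<bar>g 1\<bar> * x" using lin[OF x] xp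
          by (smt (verit, best) mult.commute mult_left_mono abs_ge_self abs_ge_minus_self)
        ultimately show ?thesis unfolding c_def by (simp add: algebra_simps)
      qed
    qed
  qed
  thus ?thesis using c0 by blast
qed

lemma iter_join_props:
  assumes M: "prob_space M" and T: "T \<in> M \<rightarrow>\<^sub>M M" and P: "finite_meas_partition M P"
  shows "finite (iter_join M T P n)" "iter_join M T P n \<subseteq> sets M"
    "disjoint_family_on id (iter_join M T P n)"
proof -
  have fP: "finite P" and sP: "P \<subseteq> sets M" and dP: "\<And>A B. A\<in>P \<Longrightarrow> B\<in>P \<Longrightarrow> A \<noteq> B \<Longrightarrow> A \<inter> B = {}"
    using P by (auto simp: finite_meas_partition_def)
  let ?f = "\<lambda>C. space M \<inter> (\<Inter>i<n. (T ^^ i) -` (C i))"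
  have "iter_join M T P n = (\<lambda>C. ?f C) ` {C. \<forall>i<n. C i \<in> P}" unfolding iter_join_def by auto
  also have "\<dots> = (\<lambda>C. ?f C) ` ({..<n} \<rightarrow>\<^sub>E P)"
  proof -
    have "?f C \<in> (\<lambda>C. ?f C) ` ({..<n} \<rightarrow>\<^sub>E P)" if "\<forall>i<n. C i \<in> P" for C
      using that by (intro image_eqI[of _ _ "restrict C {..<n}"]) auto
    thus ?thesis by auto
  qed
  finally have eq: "iter_join M T P n = (\<lambda>C. ?f C) ` ({..<n} \<rightarrow>\<^sub>E P)" .
  show "finite (iter_join M T P n)" unfolding eq using fP by (intro finite_imageI finite_PiE) auto
  show "iter_join M T P n \<subseteq> sets M"
  proof
    fix A assume "A \<in> iter_join M T P n"
    then obtain C where C: "\<forall>i<n. C i \<in> P" and A: "A = ?f C" unfolding iter_join_def by auto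
    have "?f C = (\<Inter>i<n. (T ^^ i) -` (C i) \<inter> space M) \<inter> space M" by auto
    also have "\<dots> \<in> sets M"
    proof (cases "n = 0")
      case True thus ?thesis by simp
    next
      case False
      have "(\<Inter>i<n. (T ^^ i) -` (C i) \<inter> space M) \<in> sets M"
        using False C sP by (intro sets.finite_INT) (auto intro!: measurable_sets[OF measurable_compose_n[OF T]])
      thus ?thesis by auto
    qed
    finally show "A \<in> sets M" using A by simp
  qed
  show "disjoint_family_on id (iter_join M T P n)"
    unfolding disjoint_family_on_def
  proof (intro ballI impI)
    fix A B assume A: "A \<in> iter_join M T P n" and B: "B \<in> iter_join M T P n" and ne: "A \<noteq> B"
    obtain C where C: "\<forall>i<n. C i \<in> P" and A': "A = ?f C" using A unfolding iter_join_def by auto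
    obtain D where D: "\<forall>i<n. D i \<in> P" and B': "B = ?f D" using B unfolding iter_join_def by auto
    show "id A \<inter> id B = {}"
    proof (rule ccontr)
      assume "id A \<inter> id B \<noteq> {}"
      then obtain x where x: "x \<in> A" "x \<in> B" by auto
      have "\<forall>i<n. C i = D i"
      proof (intro allI impI)
        fix i assume i: "i < n"
        have "(T ^^ i) x \<in> C i \<inter> D i" using x A' B' i by auto
        thus "C i = D i" using dP C D i by blast
      qed
      hence "?f C = ?f D" by auto
      thus False using ne A' B' by simp
    qed
  qed
qed

lemma sum_measure_le1:
  assumes M: "prob_space M" and T: "T \<in> M \<rightarrow>\<^sub>M M" and P: "finite_meas_partition M P"
  shows "(\<Sum>A\<in>iter_join M T P n. measure M A) \<le> 1"
proof -
  interpret prob_space M by fact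
  note pr = iter_join_props[OF M T P, of n]
  have "(\<Sum>A\<in>iter_join M T P n. measure M A) = measure M (\<Union>A\<in>iter_join M T P n. id A)"
    using measure_finite_Union[of "iter_join M T P n" id M] pr by simp
  also have "\<dots> \<le> 1" by (rule prob_le_1)
  finally show ?thesis .
qed

lemma entropy_bound:
  assumes M: "prob_space M" and T: "T \<in> M \<rightarrow>\<^sub>M M" and P: "finite_meas_partition M P"
    and c: "c \<ge> 0" and pw: "\<forall>x\<in>{0..1::real}. g x \<ge> K * eta x - c * x"
  shows "gen_entropy M g (iter_join M T P n) \<ge> K * gen_entropy M eta (iter_join M T P n) - c"
proof -
  interpret prob_space M by fact
  let ?Q = "iter_join M T P n"
  have "(\<Sum>A\<in>?Q. g (measure M A)) \<ge> (\<Sum>A\<in>?Q. K * eta (measure M A) - c * measure M A)"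
    using pw by (intro sum_mono) (auto simp: prob_le_1)
  also have "(\<Sum>A\<in>?Q. K * eta (measure M A) - c * measure M A)
      = K * (\<Sum>A\<in>?Q. eta (measure M A)) - c * (\<Sum>A\<in>?Q. measure M A)"
    by (simp add: sum_subtractf sum_distrib_left)
  also have "c * (\<Sum>A\<in>?Q. measure M A) \<le> c"
    using sum_measure_le1[OF M T P, of n] c by (simp add: mult_left_le)
  ultimately show ?thesis unfolding gen_entropy_def by linarith
qed

theorem mainTheorem8:
  fixes M :: "'a measure" and T :: "'a \<Rightarrow> 'a" and g :: "real \<Rightarrow> real" and P :: "'a set set"
  assumes "prob_space M"
    and "measure_preserving_map M T"
    and "g \<in> G0_inf"
    and "finite_meas_partition M P"
    and "gen_dyn_entropy M T eta P > 0"
  shows "gen_dyn_entropy M T g P = \<infinity>"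
proof -
  have T: "T \<in> M \<rightarrow>\<^sub>M M" using assms(2) by (simp add: measure_preserving_map_def)
  define a where "a n = gen_entropy M eta (iter_join M T P n) / real n" for n
  define b where "b n = gen_entropy M g (iter_join M T P n) / real n" for n
  have pos: "0 < limsup (\<lambda>n. ereal (a n))" using assms(5) by (simp add: gen_dyn_entropy_def a_def)
  obtain r :: real where r: "0 < r" "ereal r < limsup (\<lambda>n. ereal (a n))"
  proof -
    obtain z where "0 < z" "z < limsup (\<lambda>n. ereal (a n))" using pos ereal_dense2 by blast
    then obtain r :: real where "0 < r" "ereal r < limsup (\<lambda>n. ereal (a n))"
      by (metis dual_order.strict_trans ereal_dense2 ereal_less(2) less_ereal.simps(4) zero_ereal_def ereal_infty_less(2) not_less_iff_gr_or_eq)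
    thus ?thesis using that by blast
  qed
  have freq: "frequently (\<lambda>n. r < a n) sequentially"
  proof -
    have "\<not> (ereal r \<ge> limsup (\<lambda>n. ereal (a n)))" using r(2) by simp
    then obtain y where y: "y > ereal r" "\<not> eventually (\<lambda>n. y > ereal (a n)) sequentially"
      unfolding Limsup_le_iff by blast
    hence "frequently (\<lambda>n. y \<le> ereal (a n)) sequentially"
      by (simp add: frequently_def not_le)
    thus ?thesis
    proof (rule frequently_elim1)
      fix n assume "y \<le> ereal (a n)"
      hence "ereal r < ereal (a n)" using y(1) by (meson less_le_trans)
      thus "r < a n" by simp
    qed
  qed
  show ?thesis unfolding gen_dyn_entropy_def
  proof (rule ereal_top)
    fix B :: real
    define K where "K = (\<bar>B\<bar> + 1) / r"
    have K0: "K \<ge> 0" using r by (simp add: K_def)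
    have Kr: "K * r = \<bar>B\<bar> + 1" using r by (simp add: K_def)
    obtain c where c: "c \<ge> 0" "\<forall>x\<in>{0..1::real}. g x \<ge> K * eta x - c * x"
      using pointwise_bound[OF assms(3) K0] by blast
    have bnd: "b n \<ge> K * a n - c / real n" if "n > 0" for n
    proof -
      have "gen_entropy M g (iter_join M T P n) \<ge> K * gen_entropy M eta (iter_join M T P n) - c"
        by (rule entropy_bound[OF assms(1) T assms(4) c])
      hence "(K * gen_entropy M eta (iter_join M T P n) - c) / real n \<le> gen_entropy M g (iter_join M T P n) / real n"
        by (simp add: divide_right_mono)
      moreover have "(K * gen_entropy M eta (iter_join M T P n) - c) / real n = K * a n - c / real n"
        unfolding a_def by (simp add: diff_divide_distrib)
      ultimately show ?thesis unfolding b_def by simp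
    qed
    have ev: "eventually (\<lambda>n. n > 0 \<and> c / real n < 1) sequentially"
    proof -
      have "((\<lambda>n. c / real n) \<longlongrightarrow> 0) sequentially"
        by (rule tendsto_divide_0[OF tendsto_const]) (rule filterlim_at_top_imp_at_infinity[OF filterlim_real_sequentially])
      hence "eventually (\<lambda>n. c / real n < 1) sequentially" by (rule order_tendstoD) simp
      moreover have "eventually (\<lambda>n. n > (0::nat)) sequentially" by (rule eventually_gt_at_top)
      ultimately show ?thesis using eventually_conj by fastforce
    qed
    have freqb: "frequently (\<lambda>n. B < b n) sequentially"
      using frequently_eventually_frequently[OF freq ev]
    proof (rule frequently_elim1)
      fix n assume h: "r < a n \<and> 0 < n \<and> c / real n < 1"
      have "K * a n \<ge> K * r" using h K0 by (simp add: mult_left_mono)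
      thus "B < b n" using bnd[of n] h Kr by linarith
    qed
    show "ereal B \<le> limsup (\<lambda>n. ereal (gen_entropy M g (iter_join M T P n) / real n))"
    proof (rule ccontr)
      assume "\<not> ?thesis"
      hence "limsup (\<lambda>n. ereal (b n)) < ereal B" by (simp add: b_def)
      hence "eventually (\<lambda>n. ereal (b n) < ereal B) sequentially" by (rule Limsup_lessD)
      hence "eventually (\<lambda>n. \<not> B < b n) sequentially" by (rule eventually_mono) simp
      thus False using freqb by (simp add: frequently_def)
    qed
  qed
qed

end
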